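(* Let $(B,\lfloor\cdot,\cdot\rfloor)$ be an SSD space with quadratic form $q$ and let $A\subset B$ be $q$-representable. If $\Phi_A(b)\ge q(b)$ for all $b\in\operatorname{conv}^w A$, then $A=G_{\Phi_A}$.
   Context: An SSD space is a pair $(B,\lfloor\cdot,\cdot\rfloor)$ with $B$ a nonzero real vector space and $\lfloor\cdot,\cdot\rfloor$ a symmetric bilinear form; $q(b)=\frac12\lfloor b,b\rfloor$. $w(B,B)$ is the coarsest topology on $B$ making all maps $b\mapsto\lfloor b,c\rfloor$ continuous; $\operatorname{conv}^w A$ is the $w(B,B)$-closure of the convex hull of $A$. A nonempty $A\subset B$ is $q$-positive if $q(b-c)\ge0$ for all $b,c\in A$. $\Phi_A(x)=\sup_{a\in A}\{\lfloor x,a\rfloor-q(a)\}$. For proper convex $f$, $f^{@}(b)=\sup_{c\in B}\{\lfloor c,b\rfloor-f(c)\}$, $\mathcal{P}_q(f)=\{b: f(b)=q(b)\}$, $G_f=\{b: f(b)+f^{@}(b)=\lfloor b,b\rfloor\}$. A $q$-positive set $A$ is $q$-representable if there is a $w(B,B)$-lsc proper convex $f:B\to\mathbb{R}\cup\{+\infty\}$ with $f\ge q$ on $B$ and $\mathcal{P}_q(f)=A$. *)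

theory Defs
  imports "HOL-Analysis.Analysis"
begin

definition SSD_space :: "('b::real_vector \<Rightarrow> 'b \<Rightarrow> real) \<Rightarrow> bool" where
  "SSD_space s \<longleftrightarrow> (\<exists>b::'b. b \<noteq> 0) \<and> (\<forall>x y. s x y = s y x) \<and>
     (\<forall>c. linear (\<lambda>x. s x c))"

definition qf :: "('b \<Rightarrow> 'b \<Rightarrow> real) \<Rightarrow> 'b \<Rightarrow> real" where
  "qf s b = s b b / 2"

definition wtop :: "('b \<Rightarrow> 'b \<Rightarrow> real) \<Rightarrow> 'b topology" where
  "wtop s = topology_generated_by {{x. s x c \<in> U} | c U. open U}"

definition conv_w :: "('b::real_vector \<Rightarrow> 'b \<Rightarrow> real) \<Rightarrow> 'b set \<Rightarrow> 'b set" where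
  "conv_w s A = (wtop s) closure_of (convex hull A)"

definition q_positive :: "('b::real_vector \<Rightarrow> 'b \<Rightarrow> real) \<Rightarrow> 'b set \<Rightarrow> bool" where
  "q_positive s A \<longleftrightarrow> A \<noteq> {} \<and> (\<forall>b\<in>A. \<forall>c\<in>A. qf s (b - c) \<ge> 0)"

definition PhiA :: "('b \<Rightarrow> 'b \<Rightarrow> real) \<Rightarrow> 'b set \<Rightarrow> 'b \<Rightarrow> ereal" where
  "PhiA s A x = (SUP a\<in>A. ereal (s x a - qf s a))"

text \<open>Functions B \<rightarrow> \<real> \<union> {+\<infinity>} are represented as ereal-valued functions never equal to -\<infinity>.\<close>
definition proper_fun :: "('b \<Rightarrow> ereal) \<Rightarrow> bool" where
  "proper_fun f \<longleftrightarrow> (\<forall>x. f x \<noteq> -\<infinity>) \<and> (\<exists>x. f x \<noteq> \<infinity>)"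

definition convex_fun :: "('b::real_vector \<Rightarrow> ereal) \<Rightarrow> bool" where
  "convex_fun f \<longleftrightarrow> (\<forall>x y (t::real). 0 \<le> t \<and> t \<le> 1 \<longrightarrow>
      f (t *\<^sub>R x + (1 - t) *\<^sub>R y) \<le> ereal t * f x + ereal (1 - t) * f y)"

definition lsc_in :: "'b topology \<Rightarrow> ('b \<Rightarrow> ereal) \<Rightarrow> bool" where
  "lsc_in T f \<longleftrightarrow> (\<forall>t::real. closedin T {x \<in> topspace T. f x \<le> ereal t})"

definition fenchel_at :: "('b \<Rightarrow> 'b \<Rightarrow> real) \<Rightarrow> ('b \<Rightarrow> ereal) \<Rightarrow> 'b \<Rightarrow> ereal" where
  "fenchel_at s f b = (SUP c. ereal (s c b) - f c)"

definition Pq :: "('b \<Rightarrow> 'b \<Rightarrow> real) \<Rightarrow> ('b \<Rightarrow> ereal) \<Rightarrow> 'b set" where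
  "Pq s f = {b. f b = ereal (qf s b)}"

definition Gf :: "('b \<Rightarrow> 'b \<Rightarrow> real) \<Rightarrow> ('b \<Rightarrow> ereal) \<Rightarrow> 'b set" where
  "Gf s f = {b. f b + fenchel_at s f b = ereal (s b b)}"

definition q_representable :: "('b::real_vector \<Rightarrow> 'b \<Rightarrow> real) \<Rightarrow> 'b set \<Rightarrow> bool" where
  "q_representable s A \<longleftrightarrow> q_positive s A \<and>
     (\<exists>f. lsc_in (wtop s) f \<and> proper_fun f \<and> convex_fun f \<and>
          (\<forall>b. f b \<ge> ereal (qf s b)) \<and> Pq s f = A)"

end

theory Submission
  imports Defs
begin


lemma wtop_topspace: "topspace (wtop s) = UNIV"
  unfolding wtop_def topology_generated_by_topspace
  by (rule set_eqI) (auto intro!: exI[of _ "{x. s x undefined \<in> UNIV}"])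

lemma wtop_nbhd:
  assumes "openin (wtop s) U" "x \<in> U"
  shows "\<exists>F \<epsilon>. finite F \<and> \<epsilon> > 0 \<and> {y. \<forall>c\<in>F. \<bar>s y c - s x c\<bar> < \<epsilon>} \<subseteq> U"
proof -
  have "generate_topology_on {{x. s x c \<in> U} | c U. open U} U"
    using assms(1) unfolding wtop_def by (rule openin_topology_generated_by)
  then show ?thesis using assms(2)
  proof (induction arbitrary: x)
    case Empty then show ?case by simp
  next
    case (Int a b)
    obtain F1 e1 where 1: "finite F1" "e1 > 0" "{y. \<forall>c\<in>F1. \<bar>s y c - s x c\<bar> < e1} \<subseteq> a"
      using Int.IH(1)[of x] Int.prems by auto
    obtain F2 e2 where 2: "finite F2" "e2 > 0" "{y. \<forall>c\<in>F2. \<bar>s y c - s x c\<bar> < e2} \<subseteq> b"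
      using Int.IH(2)[of x] Int.prems by auto
    show ?case
      by (rule exI[of _ "F1 \<union> F2"], rule exI[of _ "min e1 e2"]) (use 1 2 in auto)
  next
    case (UN K)
    then obtain k where "k \<in> K" "x \<in> k" by blast
    then show ?case using UN.IH[of k x] by blast
  next
    case (Basis S)
    then obtain c V where S: "S = {x. s x c \<in> V}" "open V" by blast
    with Basis have "s x c \<in> V" by simp
    then obtain e where "e > 0" "ball (s x c) e \<subseteq> V" using S(2) open_contains_ball by blast
    then show ?case
      by (intro exI[of _ "{c}"] exI[of _ e]) (auto simp: S dist_real_def)
  qed
qed



lemma finsep:
  fixes L :: "'i set" and D :: "('i \<Rightarrow> real) set"
  assumes fin: "finite L"
    and cvx: "\<And>d e t. d\<in>D \<Longrightarrow> e\<in>D \<Longrightarrow> 0\<le>t \<Longrightarrow> t\<le>1 \<Longrightarrow> (\<lambda>i. t * d i + (1-t) * e i) \<in> D"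
    and ne: "D \<noteq> {}" and bnd: "\<And>d. d\<in>D \<Longrightarrow> (\<Sum>i\<in>L. (d i)^2) \<ge> \<epsilon>"
  shows "\<exists>a. \<forall>d\<in>D. (\<Sum>i\<in>L. a i * d i) \<ge> \<epsilon>"
proof -
  define N where "N d = (\<Sum>i\<in>L. (d i)^2)" for d :: "'i \<Rightarrow> real"
  define m where "m = Inf (N ` D)"
  have bdd: "bdd_below (N ` D)" by (rule bdd_belowI[of _ 0]) (auto simp: N_def intro: sum_nonneg)
  have mle: "m \<le> N d" if "d \<in> D" for d
    unfolding m_def using bdd that by (simp add: cInf_lower)
  have me: "\<epsilon> \<le> m" unfolding m_def using ne bnd by (auto intro!: cINF_greatest simp: N_def)
  have "\<exists>y\<in>D. N y < m + 1 / (real k + 1)" for k :: nat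
  proof -
    have "Inf (N ` D) < m + 1 / (real k + 1)" unfolding m_def by (simp add: add_pos_pos)
    then show ?thesis using cInf_less_iff[of "N ` D"] ne bdd by auto
  qed
  then obtain y where yD: "\<And>k. y k \<in> D" and yN: "\<And>k. N (y k) < m + 1 / (real k + 1)"
    by metis
  have par: "N (\<lambda>i. y j i - y k i) \<le> 2 / (real j + 1) + 2 / (real k + 1)" for j k
  proof -
    define z where "z = (\<lambda>i. (1/2) * y j i + (1 - 1/2) * y k i)"
    have "z \<in> D" unfolding z_def by (rule cvx) (auto simp: yD)
    then have "m \<le> N z" by (rule mle)
    have "N (\<lambda>i. y j i - y k i) = 2 * N (y j) + 2 * N (y k) - 4 * N z"
      unfolding N_def z_def
      by (simp add: sum_distrib_left sum_subtractf[symmetric] sum.distrib[symmetric] power2_eq_square algebra_simps)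
    then show ?thesis using yN[of j] yN[of k] \<open>m \<le> N z\<close> by linarith
  qed
  have conv: "\<exists>l. (\<lambda>k. y k i) \<longlonglongrightarrow> l" if "i \<in> L" for i
  proof -
    have "Cauchy (\<lambda>k. y k i)"
    proof (rule metric_CauchyI)
      fix e :: real assume "e > 0"
      obtain M :: nat where M: "4 / e^2 < real M + 1"
        using reals_Archimedean2[of "4 / e^2"] by (metis less_add_one order_less_trans of_nat_1 of_nat_add)
      have "dist (y j i) (y k i) < e" if "j \<ge> M" "k \<ge> M" for j k
      proof -
        have "(y j i - y k i)^2 \<le> N (\<lambda>i. y j i - y k i)"
          unfolding N_def using fin \<open>i \<in> L\<close> by (intro member_le_sum) auto
        also have "\<dots> \<le> 2 / (real j + 1) + 2 / (real k + 1)" by (rule par)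
        also have "\<dots> \<le> 2 / (real M + 1) + 2 / (real M + 1)"
          using that by (intro add_mono divide_left_mono) auto
        also have "\<dots> = 4 / (real M + 1)" by simp
        also have "\<dots> < e^2"
          using M \<open>e > 0\<close> by (simp add: field_simps)
        finally have "\<bar>y j i - y k i\<bar>^2 < e^2" by simp
        then show ?thesis using \<open>e > 0\<close> power_less_imp_less_base[of "\<bar>y j i - y k i\<bar>" 2 e] by (simp add: dist_real_def)
      qed
      then show "\<exists>M. \<forall>m\<ge>M. \<forall>n\<ge>M. dist (y m i) (y n i) < e" by blast
    qed
    then show ?thesis using Cauchy_convergent_iff convergent_def by blast
  qed
  define a where "a i = lim (\<lambda>k. y k i)" for i
  have lim_a: "(\<lambda>k. y k i) \<longlonglongrightarrow> a i" if "i \<in> L" for i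
    using conv[OF that] unfolding a_def by (metis limI)
  have Na: "N a = m"
  proof -
    have "(\<lambda>k. N (y k)) \<longlonglongrightarrow> N a"
      unfolding N_def by (intro tendsto_sum tendsto_power lim_a)
    moreover have "(\<lambda>k. N (y k)) \<longlonglongrightarrow> m"
    proof (rule real_tendsto_sandwich[of "\<lambda>k. m" _ _ "\<lambda>k. m + 1 / (real k + 1)"])
      show "\<forall>\<^sub>F k in sequentially. m \<le> N (y k)" by (intro always_eventually allI mle yD)
      show "\<forall>\<^sub>F k in sequentially. N (y k) \<le> m + 1 / (real k + 1)" by (intro always_eventually allI less_imp_le yN)
      show "(\<lambda>k. m) \<longlonglongrightarrow> m" by simp
      have "(\<lambda>k. 1 / (real k + 1)) \<longlonglongrightarrow> 0" using LIMSEQ_inverse_real_of_nat by (simp add: inverse_eq_divide add.commute)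
      then show "(\<lambda>k. m + 1 / (real k + 1)) \<longlonglongrightarrow> m" using tendsto_add[of "\<lambda>k. m" m sequentially] by fastforce
    qed
    ultimately show ?thesis using LIMSEQ_unique by blast
  qed
  show ?thesis
  proof (intro exI ballI)
    fix d assume "d \<in> D"
    define P where "P = (\<Sum>i\<in>L. a i * (d i - a i))"
    define Q where "Q = (\<Sum>i\<in>L. (d i - a i)^2)"
    have Q0: "Q \<ge> 0" unfolding Q_def by (intro sum_nonneg) auto
    have key: "2 * t * P + t^2 * Q \<ge> 0" if "0 < t" "t \<le> 1" for t
    proof -
      define za where "za i = t * d i + (1 - t) * a i" for i
      have "(\<lambda>k. N (\<lambda>i. t * d i + (1 - t) * y k i)) \<longlonglongrightarrow> N za"
        unfolding N_def za_def by (intro tendsto_sum tendsto_power tendsto_add tendsto_mult tendsto_const lim_a)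
      moreover have "\<forall>\<^sub>F k in sequentially. m \<le> N (\<lambda>i. t * d i + (1 - t) * y k i)"
        using that by (intro always_eventually allI mle cvx \<open>d \<in> D\<close> yD) auto
      ultimately have "m \<le> N za" by (rule tendsto_lowerbound) simp
      have "N za = N a + 2 * t * P + t^2 * Q"
        unfolding N_def za_def P_def Q_def
        by (simp add: sum.distrib[symmetric] sum_distrib_left power2_eq_square algebra_simps)
      then show ?thesis using \<open>m \<le> N za\<close> Na by linarith
    qed
    have P0: "P \<ge> 0"
    proof (rule ccontr)
      assume "\<not> P \<ge> 0"
      then have Pn: "P < 0" by simp
      show False
      proof (cases "Q = 0")
        case True then show False using key[of 1] Pn by simp
      next
        case False
        then have Qp: "Q > 0" using Q0 by simp
        define t where "t = min 1 (- P / Q)"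
        have t0: "t > 0" using Pn Qp by (simp add: t_def divide_neg_pos)
        have "t * Q \<le> - P" using Qp by (simp add: t_def min_def field_simps split: if_splits)
        then have "t * (t * Q) \<le> t * (- P)" using t0 by (intro mult_left_mono) auto
        then have "2 * t * P + t^2 * Q \<le> t * P" by (simp add: power2_eq_square algebra_simps)
        moreover have "t * P < 0" using t0 Pn by (simp add: mult_pos_neg)
        moreover have "t \<le> 1" by (simp add: t_def)
        ultimately show False using key[of t] t0 by linarith
      qed
    qed
    have "(\<Sum>i\<in>L. a i * d i) = P + N a"
      unfolding P_def N_def by (simp add: sum.distrib[symmetric] power2_eq_square algebra_simps)
    then show "(\<Sum>i\<in>L. a i * d i) \<ge> \<epsilon>" using P0 Na me by linarith
  qed
qed


lemma ssd_facts:
  assumes "SSD_space s"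
  shows "s x y = s y x" "s (x + y) c = s x c + s y c" "s (x - y) c = s x c - s y c"
    "s (r *\<^sub>R x) c = r * s x c" "s c (x + y) = s c x + s c y" "s c (x - y) = s c x - s c y"
    "s c (r *\<^sub>R x) = r * s c x"
proof -
  have sym: "\<And>x y. s x y = s y x" and lin: "\<And>c. linear (\<lambda>x. s x c)"
    using assms unfolding SSD_space_def by auto
  show 1: "s x y = s y x" by (rule sym)
  show 2: "\<And>x y c. s (x + y) c = s x c + s y c" using linear_add[OF lin] by simp
  show 3: "\<And>x y c. s (x - y) c = s x c - s y c" using linear_diff[OF lin] by simp
  show 4: "\<And>x c r. s (r *\<^sub>R x) c = r * s x c" using linear_scale[OF lin] by simp
  show "s c (x + y) = s c x + s c y" using 2 sym by metis
  show "s c (x - y) = s c x - s c y" using 3 sym by metis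
  show "s c (r *\<^sub>R x) = r * s c x" using 4 sym by metis
qed

lemma ssd_sum2:
  assumes "SSD_space s"
  shows "s x (\<Sum>c\<in>F. a c *\<^sub>R c) = (\<Sum>c\<in>F. a c * s x c)"
proof -
  have lin: "linear (\<lambda>y. s x y)"
    using assms unfolding SSD_space_def by (metis (no_types, lifting) ext)
  show ?thesis unfolding linear_sum[OF lin, of "\<lambda>c. a c *\<^sub>R c" F] o_def
    using linear_scale[OF lin] by simp
qed

lemma qf_diff:
  assumes "SSD_space s"
  shows "qf s (a - b) = qf s a - s a b + qf s b"
proof -
  note sf = ssd_facts[OF assms]
  have "s (a - b) (a - b) = s a (a - b) - s b (a - b)" by (rule sf(3))
  also have "\<dots> = s a a - s a b - (s b a - s b b)" by (simp only: sf(6))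
  finally show ?thesis unfolding qf_def using sf(1)[of a b] by (simp add: field_simps)
qed

lemma ereal_minus_le_aux: "ereal (r - z) \<le> y \<Longrightarrow> ereal r - y \<le> ereal z"
  by (cases y) auto

lemma ereal_minus_ge_aux: "y \<le> ereal z \<Longrightarrow> ereal (r - z) \<le> ereal r - y"
  by (cases y) auto

theorem mainTheorem12:
  fixes s :: "'b::real_vector \<Rightarrow> 'b \<Rightarrow> real" and A :: "'b set"
  assumes "SSD_space s"
    and "q_representable s A"
    and "\<forall>b\<in>conv_w s A. PhiA s A b \<ge> ereal (qf s b)"
  shows "A = Gf s (PhiA s A)"
proof -
  note sf = ssd_facts[OF assms(1)]
  obtain f where lsc: "lsc_in (wtop s) f" and prpf: "proper_fun f" and cvxf: "convex_fun f"
    and fge: "\<forall>b. f b \<ge> ereal (qf s b)" and PqA: "Pq s f = A"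
    and qpos: "q_positive s A"
    using assms(2) unfolding q_representable_def by blast
  have Ane: "A \<noteq> {}" and qp: "\<And>a b. a \<in> A \<Longrightarrow> b \<in> A \<Longrightarrow> qf s (a - b) \<ge> 0"
    using qpos unfolding q_positive_def by auto
  obtain a0 where a0: "a0 \<in> A" using Ane by blast
  define g where "g = PhiA s A"
  have g_lb: "ereal (s x a - qf s a) \<le> g x" if "a \<in> A" for x a
    unfolding g_def PhiA_def using that by (rule SUP_upper)
  have g_ub: "g x \<le> ereal G" if "\<And>a. a \<in> A \<Longrightarrow> s x a - qf s a \<le> G" for x G
    unfolding g_def PhiA_def using that by (simp add: SUP_least)
  have qa: "s a a' - qf s a' \<le> qf s a" if "a \<in> A" "a' \<in> A" for a a'
    using qp[OF that] qf_diff[OF assms(1), of a a'] by linarith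
  have gA: "g a = ereal (qf s a)" if "a \<in> A" for a
  proof (rule antisym)
    show "g a \<le> ereal (qf s a)" by (rule g_ub) (rule qa[OF that])
    have "ereal (s a a - qf s a) \<le> g a" by (rule g_lb[OF that])
    then show "ereal (qf s a) \<le> g a" by (simp add: qf_def)
  qed
  have F_lb: "ereal (s c b) - g c \<le> fenchel_at s g b" for c b
    unfolding fenchel_at_def by (rule SUP_upper) simp
  have fA: "a \<in> A \<longleftrightarrow> f a = ereal (qf s a)" for a
    using PqA unfolding Pq_def by blast
  show ?thesis
  proof (rule set_eqI iffI)+
    fix a assume aA: "a \<in> A"
    have "fenchel_at s g a = ereal (qf s a)"
    proof (rule antisym)
      show "fenchel_at s g a \<le> ereal (qf s a)"
        unfolding fenchel_at_def
        by (rule SUP_least, rule ereal_minus_le_aux, rule g_lb[OF aA])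
      have "ereal (s a a) - g a \<le> fenchel_at s g a" by (rule F_lb)
      then show "ereal (qf s a) \<le> fenchel_at s g a" using gA[OF aA] by (simp add: qf_def)
    qed
    then show "a \<in> Gf s (PhiA s A)"
      using gA[OF aA] unfolding Gf_def g_def[symmetric] by (simp add: qf_def)
  next
    fix b assume "b \<in> Gf s (PhiA s A)"
    then have hb: "g b + fenchel_at s g b = ereal (s b b)" unfolding Gf_def g_def by simp
    have g_nm: "g b \<noteq> -\<infinity>" using g_lb[OF a0, of b] by auto
    have F_nm: "fenchel_at s g b \<noteq> -\<infinity>" using F_lb[of a0 b] gA[OF a0] by auto
    obtain G1 G2 where G1: "g b = ereal G1" and G2: "fenchel_at s g b = ereal G2"
      using hb g_nm F_nm by (cases "g b"; cases "fenchel_at s g b") auto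
    have G12: "G1 + G2 = s b b" using hb G1 G2 by simp
    have unb: False if "\<delta> > 0" "\<And>a. a \<in> A \<Longrightarrow> s a w \<ge> s b w + \<delta>" for w \<delta>
    proof -
      define t where "t = \<bar>G2 - (s a0 b - qf s a0)\<bar> / \<delta> + 1"
      have t0: "t \<ge> 0" unfolding t_def using \<open>\<delta> > 0\<close> by simp
      have "t * \<delta> = \<bar>G2 - (s a0 b - qf s a0)\<bar> + \<delta>"
        unfolding t_def using \<open>\<delta> > 0\<close> by (simp add: field_simps)
      then have tb: "t * \<delta> > G2 - (s a0 b - qf s a0)"
        using \<open>\<delta> > 0\<close> abs_ge_self[of "G2 - (s a0 b - qf s a0)"] by linarith
      define x where "x = a0 - t *\<^sub>R w"
      have "g x \<le> ereal (qf s a0 - t * (s b w + \<delta>))"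
      proof (rule g_ub)
        fix a assume aA: "a \<in> A"
        have "t * (s b w + \<delta>) \<le> t * s w a"
          using mult_left_mono[OF that(2)[OF aA] t0] sf(1)[of w a] by simp
        then show "s x a - qf s a \<le> qf s a0 - t * (s b w + \<delta>)"
          using qa[OF a0 aA] unfolding x_def sf(3,4) by linarith
      qed
      then have "ereal (s x b - (qf s a0 - t * (s b w + \<delta>))) \<le> ereal (s x b) - g x"
        by (rule ereal_minus_ge_aux)
      also have "\<dots> \<le> ereal G2" using F_lb[of x b] G2 by simp
      finally have "s x b - (qf s a0 - t * (s b w + \<delta>)) \<le> G2" by simp
      moreover have "s x b = s a0 b - t * s b w" unfolding x_def sf(3,4) using sf(1)[of w b] by simp
      ultimately show False using tb by (simp add: algebra_simps)
    qed
    have bconv: "b \<in> conv_w s A"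
    proof (rule ccontr)
      assume "b \<notin> conv_w s A"
      then obtain T where T: "b \<in> T" "openin (wtop s) T" "\<And>y. y \<in> convex hull A \<Longrightarrow> y \<notin> T"
        unfolding conv_w_def in_closure_of wtop_topspace by blast
      obtain F \<epsilon> where F: "finite F" "\<epsilon> > 0" "{y. \<forall>c\<in>F. \<bar>s y c - s b c\<bar> < \<epsilon>} \<subseteq> T"
        using wtop_nbhd[OF T(2) T(1)] by blast
      define u where "u x = (\<lambda>c. s x c - s b c)" for x
      have "\<exists>av. \<forall>d\<in>u ` (convex hull A). (\<Sum>i\<in>F. av i * d i) \<ge> \<epsilon>^2"
      proof (rule finsep)
        show "finite F" by fact
        show "u ` (convex hull A) \<noteq> {}" using Ane by simp
        fix d e and t :: real assume "d \<in> u ` (convex hull A)" "e \<in> u ` (convex hull A)" "0 \<le> t" "t \<le> 1"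
        then obtain x y where xy: "x \<in> convex hull A" "y \<in> convex hull A" "d = u x" "e = u y" by blast
        have "t *\<^sub>R x + (1 - t) *\<^sub>R y \<in> convex hull A"
          using convexD[OF convex_convex_hull xy(1,2)] \<open>0 \<le> t\<close> \<open>t \<le> 1\<close> by simp
        moreover have "(\<lambda>i. t * d i + (1 - t) * e i) = u (t *\<^sub>R x + (1 - t) *\<^sub>R y)"
          unfolding xy u_def by (rule ext) (simp add: sf(2-7) algebra_simps)
        ultimately show "(\<lambda>i. t * d i + (1 - t) * e i) \<in> u ` (convex hull A)" by simp
      next
        fix d assume "d \<in> u ` (convex hull A)"
        then obtain x where x: "x \<in> convex hull A" "d = u x" by blast
        then have "x \<notin> T" using T(3) by blast
        then obtain c where c: "c \<in> F" "\<bar>s x c - s b c\<bar> \<ge> \<epsilon>" using F(3) by force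
        have "\<epsilon>^2 \<le> \<bar>s x c - s b c\<bar>^2" using c(2) F(2) by (intro power_mono) auto
        also have "\<dots> = (d c)^2" by (simp add: x u_def)
        also have "\<dots> \<le> (\<Sum>i\<in>F. (d i)^2)" using F(1) c(1) by (intro member_le_sum) auto
        finally show "(\<Sum>i\<in>F. (d i)^2) \<ge> \<epsilon>^2" .
      qed
      then obtain av where av: "\<And>x. x \<in> convex hull A \<Longrightarrow> (\<Sum>i\<in>F. av i * (s x i - s b i)) \<ge> \<epsilon>^2"
        unfolding u_def by auto
      define w where "w = (\<Sum>c\<in>F. av c *\<^sub>R c)"
      show False
      proof (rule unb)
        show "\<epsilon>^2 > 0" using F(2) by simp
        fix a assume "a \<in> A"
        then have "a \<in> convex hull A" by (rule hull_inc)
        then have "(\<Sum>i\<in>F. av i * (s a i - s b i)) \<ge> \<epsilon>^2" by (rule av)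
        moreover have "(\<Sum>i\<in>F. av i * (s a i - s b i)) = s a w - s b w"
          unfolding w_def ssd_sum2[OF assms(1)] by (simp add: sum_subtractf[symmetric] algebra_simps)
        ultimately show "s a w \<ge> s b w + \<epsilon>^2" by simp
      qed
    qed
    have "g b \<ge> ereal (qf s b)" using assms(3) bconv unfolding g_def by blast
    then have G2q: "G2 \<le> qf s b" using G1 G12 by (simp add: qf_def)
    have "f b = ereal (qf s b)"
    proof (rule ccontr)
      assume "f b \<noteq> ereal (qf s b)"
      then have "ereal (qf s b) < f b" using fge by (simp add: order_le_neq_trans)
      then obtain r1 where r1: "qf s b < r1" "ereal r1 < f b" using ereal_dense2 by force
      define r0 where "r0 = (qf s b + r1) / 2"
      have r0: "qf s b < r0" "r0 < r1" using r1 by (auto simp: r0_def)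
      have "closedin (wtop s) {x \<in> topspace (wtop s). f x \<le> ereal r1}"
        using lsc unfolding lsc_in_def by blast
      then have op: "openin (wtop s) (UNIV - {x. f x \<le> ereal r1})"
        unfolding closedin_def wtop_topspace by simp
      have bin: "b \<in> UNIV - {x. f x \<le> ereal r1}" using r1 by auto
      obtain F \<epsilon> where F: "finite F" "\<epsilon> > 0"
        "{y. \<forall>c\<in>F. \<bar>s y c - s b c\<bar> < \<epsilon>} \<subseteq> UNIV - {x. f x \<le> ereal r1}"
        using wtop_nbhd[OF op bin] by blast
      define L where "L = insert None (Some ` F)"
      define u where "u x r = (\<lambda>i. case i of None \<Rightarrow> r - r0 | Some c \<Rightarrow> s x c - s b c)" for x r
      define D where "D = {u x r | x r. f x \<le> ereal r}"
      define e where "e = min \<epsilon> (r1 - r0)"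
      have e0: "e > 0" using F(2) r0 by (simp add: e_def)
      have fin_val: "\<exists>X. f x = ereal X \<and> X \<le> r" if "f x \<le> ereal r" for x r
        using that prpf unfolding proper_fun_def by (cases "f x") auto
      have "\<exists>av. \<forall>d\<in>D. (\<Sum>i\<in>L. av i * d i) \<ge> e^2"
      proof (rule finsep)
        show "finite L" using F(1) by (simp add: L_def)
        have "f a0 = ereal (qf s a0)" using fA a0 by blast
        then have "u a0 (qf s a0) \<in> D" unfolding D_def mem_Collect_eq
          by (intro exI[of _ a0] exI[of _ "qf s a0"]) simp
        then show "D \<noteq> {}" by blast
        fix d d' and t :: real assume "d \<in> D" "d' \<in> D" "0 \<le> t" "t \<le> 1"
        then obtain x r y r' where xy: "f x \<le> ereal r" "f y \<le> ereal r'" "d = u x r" "d' = u y r'"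
          unfolding D_def by blast
        obtain X Y where XY: "f x = ereal X" "X \<le> r" "f y = ereal Y" "Y \<le> r'"
          using fin_val[OF xy(1)] fin_val[OF xy(2)] by blast
        have "f (t *\<^sub>R x + (1 - t) *\<^sub>R y) \<le> ereal t * f x + ereal (1 - t) * f y"
          using cvxf \<open>0 \<le> t\<close> \<open>t \<le> 1\<close> unfolding convex_fun_def by blast
        also have "\<dots> = ereal (t * X + (1 - t) * Y)" using XY by simp
        also have "\<dots> \<le> ereal (t * r + (1 - t) * r')"
          using XY \<open>0 \<le> t\<close> \<open>t \<le> 1\<close> by (simp add: add_mono mult_left_mono)
        finally have fle: "f (t *\<^sub>R x + (1 - t) *\<^sub>R y) \<le> ereal (t * r + (1 - t) * r')" .
        have "(\<lambda>i. t * d i + (1 - t) * d' i) = u (t *\<^sub>R x + (1 - t) *\<^sub>R y) (t * r + (1 - t) * r')"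
          unfolding xy u_def by (rule ext) (simp add: sf(2-7) algebra_simps split: option.split)
        then show "(\<lambda>i. t * d i + (1 - t) * d' i) \<in> D" using fle unfolding D_def by blast
      next
        fix d assume "d \<in> D"
        then obtain x r where xr: "f x \<le> ereal r" "d = u x r" unfolding D_def by blast
        have "\<exists>i\<in>L. e \<le> \<bar>d i\<bar>"
        proof (rule ccontr)
          assume "\<not> (\<exists>i\<in>L. e \<le> \<bar>d i\<bar>)"
          then have all: "\<And>i. i \<in> L \<Longrightarrow> \<bar>d i\<bar> < e" by force
          have "\<bar>r - r0\<bar> < e" using all[of None] by (simp add: L_def xr u_def)
          then have "r < r1" by (simp add: e_def abs_less_iff)
          have "\<bar>s x c - s b c\<bar> < \<epsilon>" if "c \<in> F" for c
            using all[of "Some c"] that by (simp add: L_def xr u_def e_def)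
          then have "\<not> f x \<le> ereal r1" using F(3) by blast
          moreover have "f x \<le> ereal r1" using xr(1) \<open>r < r1\<close> by (meson ereal_less_eq(3) less_imp_le order_trans)
          ultimately show False by simp
        qed
        then obtain i where i: "i \<in> L" "e \<le> \<bar>d i\<bar>" by blast
        have "e^2 \<le> \<bar>d i\<bar>^2" using i(2) e0 by (intro power_mono) auto
        also have "\<dots> = (d i)^2" by simp
        also have "\<dots> \<le> (\<Sum>i\<in>L. (d i)^2)" using F(1) i(1) by (intro member_le_sum) (auto simp: L_def)
        finally show "(\<Sum>i\<in>L. (d i)^2) \<ge> e^2" .
      qed
      then obtain av where av: "\<And>d. d \<in> D \<Longrightarrow> (\<Sum>i\<in>L. av i * d i) \<ge> e^2" by blast
      define \<mu> where "\<mu> = av None"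
      define w where "w = (\<Sum>c\<in>F. av (Some c) *\<^sub>R c)"
      have sumid: "(\<Sum>i\<in>L. av i * u x r i) = \<mu> * (r - r0) + (s x w - s b w)" for x r
      proof -
        have "(\<Sum>i\<in>L. av i * u x r i) = av None * (r - r0) + (\<Sum>i\<in>Some ` F. av i * u x r i)"
          unfolding L_def using F(1) by (subst sum.insert) (auto simp: u_def)
        also have "(\<Sum>i\<in>Some ` F. av i * u x r i) = (\<Sum>c\<in>F. av (Some c) * (s x c - s b c))"
          by (subst sum.reindex) (auto simp: u_def)
        also have "\<dots> = s x w - s b w"
          unfolding w_def ssd_sum2[OF assms(1)] by (simp add: sum_subtractf[symmetric] algebra_simps)
        finally show ?thesis by (simp add: \<mu>_def)
      qed
      have key: "\<mu> * (r - r0) + (s x w - s b w) \<ge> e^2" if "f x \<le> ereal r" for x r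
        using av[of "u x r"] that sumid unfolding D_def by auto
      have keyA: "\<mu> * (r - r0) + (s a w - s b w) \<ge> e^2" if "a \<in> A" "qf s a \<le> r" for a r
        using key[of a r] fA that by auto
      have e2: "e^2 > 0" using e0 by simp
      have mu0: "\<mu> \<ge> 0"
      proof (rule ccontr)
        assume "\<not> \<mu> \<ge> 0"
        then have mn: "\<mu> < 0" by simp
        define K where "K = s a0 w - s b w"
        define t where "t = (\<bar>\<mu> * (qf s a0 - r0)\<bar> + \<bar>K\<bar> + 1) / (- \<mu>)"
        have t0: "t \<ge> 0" unfolding t_def using mn by (intro divide_nonneg_pos) auto
        have mt: "\<mu> * t = - (\<bar>\<mu> * (qf s a0 - r0)\<bar> + \<bar>K\<bar> + 1)" using mn by (simp add: t_def)
        have "\<mu> * (qf s a0 + t - r0) + K \<ge> e^2" using keyA[OF a0, of "qf s a0 + t"] t0 by (simp add: K_def)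
        moreover have "\<mu> * (qf s a0 + t - r0) = \<mu> * (qf s a0 - r0) + \<mu> * t" by (simp add: algebra_simps)
        ultimately show False using mt e2 by (smt (verit, best) abs_ge_self abs_minus_cancel)
      qed
      show False
      proof (cases "\<mu> = 0")
        case True
        show False
        proof (rule unb[OF e2])
          fix a assume "a \<in> A"
          then show "s a w \<ge> s b w + e^2" using keyA[of a "qf s a"] True by simp
        qed
      next
        case False
        then have mp: "\<mu> > 0" using mu0 by simp
        define c' where "c' = (- (1 / \<mu>)) *\<^sub>R w"
        define M where "M = - r0 - (e^2 + s b w) / \<mu>"
        have "g c' \<le> ereal M"
        proof (rule g_ub)
          fix a assume aA: "a \<in> A"
          have h: "\<mu> * (qf s a - r0) + (s a w - s b w) \<ge> e^2" using keyA[OF aA] by simp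
          have "s c' a = - (s a w) / \<mu>" unfolding c'_def sf(4) using sf(1)[of w a] by simp
          moreover have "- (s a w) / \<mu> - qf s a \<le> M"
          proof -
            have "(- (s a w) - \<mu> * qf s a) \<le> - \<mu> * r0 - (e^2 + s b w)" using h by (simp add: algebra_simps)
            then have "(- (s a w) - \<mu> * qf s a) / \<mu> \<le> (- \<mu> * r0 - (e^2 + s b w)) / \<mu>"
              using mp by (simp add: divide_right_mono)
            then show ?thesis unfolding M_def using mp by (simp add: field_simps)
          qed
          ultimately show "s c' a - qf s a \<le> M" by simp
        qed
        then have "ereal (s c' b - M) \<le> ereal (s c' b) - g c'" by (rule ereal_minus_ge_aux)
        also have "\<dots> \<le> ereal G2" using F_lb[of c' b] G2 by simp
        finally have "s c' b - M \<le> G2" by simp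
        moreover have "s c' b = - (s b w) / \<mu>" unfolding c'_def sf(4) using sf(1)[of w b] by simp
        moreover have "- (s b w) / \<mu> - M = r0 + e^2 / \<mu>" unfolding M_def by (simp add: add_divide_distrib)
        moreover have "e^2 / \<mu> > 0" using mp e2 by simp
        ultimately show False using G2q r0 by linarith
      qed
    qed
    then show "b \<in> A" using fA by simp
  qed
qed

end
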